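(* Let $F\in\mathbb{R}^{n\times n}$, $G\in\mathbb{R}^{n\times m}$, $K\in\mathbb{R}^{m\times n}$, $L\in\mathbb{R}^{n\times p}$ with $\rho[F]<1$ and $\rho[F+GK]<1$, let $\Sigma\in\mathbb{R}^{p\times p}$ be symmetric positive definite and $\alpha>0$. Consider $e_{k+1}^\delta=Fe_k^\delta-L\Sigma^{1/2}\bar\delta_k$ and $x_{k+1}^\delta=(F+GK)x_k^\delta-GKe_k^\delta$ for $k\ge k^*$, with $e_{k^*}^\delta=x_{k^*}^\delta=\mathbf{0}$ and inputs satisfying $\bar\delta_k^T\bar\delta_k\leq\alpha$ for all $k$. Then every value $x_k^\delta$, $k\ge k^*$, attainable under such inputs lies in $$\mathcal{E}_x^\delta=\bigoplus_{k=1}^{\infty}\mathcal{E}\big(\alpha\,H_kL\Sigma L^TH_k^T\big),\qquad H_k=(F+GK)^k-F^k.$$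
   Context: $\Sigma^{1/2}$ is the symmetric positive definite square root of $\Sigma$; $\rho[\cdot]$ is the spectral radius. For a symmetric positive semidefinite matrix $\mathcal{Q}$, $\mathcal{E}(\mathcal{Q})=\{\mathcal{Q}^{1/2}u:\ u^Tu\le 1\}$ (for positive definite $\mathcal{Q}$ this equals $\{\mu:\mu^T\mathcal{Q}^{-1}\mu\le1\}$). $\oplus$ denotes the Minkowski sum, and the infinite sum $\bigoplus_k\mathcal{E}_k$ is the set of all convergent sums $\sum_k y_k$ with $y_k\in\mathcal{E}_k$. *)

theory Defs
  imports "HOL-Analysis.Analysis"
begin

primrec matpow :: "('a::semiring_1)^'n^'n \<Rightarrow> nat \<Rightarrow> 'a^'n^'n" where
  "matpow A 0 = mat 1"
| "matpow A (Suc k) = A ** matpow A k"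

text \<open>Spectral radius of a real square matrix: the largest modulus of a
  (possibly complex) eigenvalue, i.e. of a root of the characteristic polynomial.\<close>
definition complexify :: "real^'n^'n \<Rightarrow> complex^'n^'n" where
  "complexify A = (\<chi> i j. complex_of_real (A $ i $ j))"

definition spectral_radius :: "real^'n^'n \<Rightarrow> real" where
  "spectral_radius A = Max {cmod l | l. det (mat l - complexify A) = 0}"

definition symmetric_mat :: "real^'n^'n \<Rightarrow> bool" where
  "symmetric_mat A \<longleftrightarrow> transpose A = A"

definition pos_semidef :: "real^'n^'n \<Rightarrow> bool" where
  "pos_semidef A \<longleftrightarrow> symmetric_mat A \<and> (\<forall>v. 0 \<le> v \<bullet> (A *v v))"

definition pos_def :: "real^'n^'n \<Rightarrow> bool" where
  "pos_def A \<longleftrightarrow> symmetric_mat A \<and> (\<forall>v. v \<noteq> 0 \<longrightarrow> 0 < v \<bullet> (A *v v))"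

definition psd_sqrt :: "real^'n^'n \<Rightarrow> real^'n^'n" where
  "psd_sqrt A = (THE R. pos_semidef R \<and> R ** R = A)"

definition ellipsoid :: "real^'n^'n \<Rightarrow> (real^'n) set" where
  "ellipsoid Q = {psd_sqrt Q *v u | u. u \<bullet> u \<le> 1}"

definition minkowski_infsum :: "(nat \<Rightarrow> 'a::real_normed_vector set) \<Rightarrow> 'a set" where
  "minkowski_infsum E = {s. \<exists>y. (\<forall>k. y k \<in> E (Suc k)) \<and> y sums s}"

end

theory Submission
  imports Defs
begin


lemma transpose_adj:
  fixes A :: "real^'n^'m"
  shows "(transpose A *v x) \<bullet> y = x \<bullet> (A *v y)"
  by (simp add: dot_lmul_matrix)

lemma sym_adj:
  fixes A :: "real^'n^'n"
  assumes "symmetric_mat A"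
  shows "(A *v x) \<bullet> y = x \<bullet> (A *v y)"
  by (metis transpose_adj symmetric_mat_def assms)

lemma adj_sym:
  fixes A :: "real^'n^'n"
  assumes "\<And>x y. (A *v x) \<bullet> y = x \<bullet> (A *v y)"
  shows "symmetric_mat A"
proof -
  have "transpose A *v x = A *v x" for x
  proof -
    have "\<forall>y. (transpose A *v x - A *v x) \<bullet> y = 0"
      using assms transpose_adj[of A x] by (simp add: inner_diff_left)
    then show ?thesis by (metis eq_iff_diff_eq_0 inner_eq_zero_iff)
  qed
  then show ?thesis unfolding symmetric_mat_def by (simp add: matrix_eq del: transpose_matrix_vector)
qed

lemma scaleR_mat_vec: "((c::real) *\<^sub>R (A::real^'n^'m)) *v x = c *\<^sub>R (A *v x)"
  by (simp add: matrix_vector_mult_def vec_eq_iff scaleR_vec_def sum_distrib_left mult_ac real_scaleR_def)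

lemma quad_zero:
  fixes a c :: real
  assumes "\<And>t. - 2 * t * a + t^2 * c \<le> 0" "c \<le> 0" "a \<ge> 0"
  shows "a = 0"
proof (rule ccontr)
  assume "a \<noteq> 0" hence a: "a > 0" using assms by simp
  define s where "s = a / (\<bar>c\<bar> + 1)"
  have s: "s > 0" using a by (simp add: s_def add_pos_nonneg)
  have "- 2 * (-s) * a + (-s)^2 * c \<le> 0" using assms(1) .
  hence "2 * s * a \<le> s^2 * \<bar>c\<bar>" using assms(2) by (simp add: power2_eq_square)
  hence "2 * a \<le> s * \<bar>c\<bar>" using s by (simp add: power2_eq_square mult.assoc)
  moreover have "s * \<bar>c\<bar> < a"
  proof -
    have "s * \<bar>c\<bar> = a * (\<bar>c\<bar> / (\<bar>c\<bar>+1))" by (simp add: s_def)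
    also have "\<dots> < a * 1" using a by (intro mult_strict_left_mono) auto
    finally show ?thesis by simp
  qed
  ultimately show False using a by linarith
qed

lemma eigvec_exists:
  fixes A :: "real^'n^'n"
  assumes sym: "symmetric_mat A" and V: "subspace V" and inv: "\<And>x. x \<in> V \<Longrightarrow> A *v x \<in> V"
    and ne: "V \<noteq> {0}"
  shows "\<exists>v\<in>V. norm v = 1 \<and> A *v v = (v \<bullet> (A *v v)) *\<^sub>R v"
proof -
  define S where "S = sphere (0::real^'n) 1 \<inter> V"
  have cS: "compact S" unfolding S_def by (intro compact_Int_closed compact_sphere closed_subspace V)
  obtain w where w: "w \<in> V" "w \<noteq> 0" using ne V subspace_0 by blast
  have "w /\<^sub>R norm w \<in> S" using w V by (simp add: S_def subspace_scale)
  hence Sne: "S \<noteq> {}" by blast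
  have cont: "continuous_on S (\<lambda>x. x \<bullet> (A *v x))"
    by (intro continuous_intros)
  obtain v where v: "v \<in> S" and vmax: "\<And>x. x \<in> S \<Longrightarrow> x \<bullet> (A *v x) \<le> v \<bullet> (A *v v)"
    using continuous_attains_sup[OF cS Sne cont] by blast
  define l where "l = v \<bullet> (A *v v)"
  have vV: "v \<in> V" and nv: "norm v = 1" using v by (auto simp: S_def)
  have vv: "v \<bullet> v = 1" using nv by (simp add: norm_eq_1)
  have bound: "x \<bullet> (A *v x) \<le> l * (x \<bullet> x)" if "x \<in> V" for x
  proof (cases "x = 0")
    case True then show ?thesis by simp
  next
    case False
    have "x /\<^sub>R norm x \<in> S" using False that V by (simp add: S_def subspace_scale)
    hence "(x /\<^sub>R norm x) \<bullet> (A *v (x /\<^sub>R norm x)) \<le> l" using vmax l_def by blast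
    hence "(x \<bullet> (A *v x)) / (norm x)^2 \<le> l"
      by (simp add: matrix_vector_mult_scaleR power2_eq_square divide_inverse mult_ac)
    hence "x \<bullet> (A *v x) \<le> l * (norm x)^2" using False by (simp add: divide_le_eq)
    then show ?thesis by (simp add: power2_norm_eq_inner)
  qed
  define u where "u = l *\<^sub>R v - A *v v"
  have uV: "u \<in> V" unfolding u_def using vV inv V by (intro subspace_diff subspace_scale) auto
  define a where "a = u \<bullet> u"
  define c where "c = u \<bullet> (A *v u) - l * (u \<bullet> u)"
  have c: "c \<le> 0" using bound[OF uV] by (simp add: c_def)
  have key: "- 2 * t * a + t^2 * c \<le> 0" for t
  proof -
    have "v + t *\<^sub>R u \<in> V" using uV vV V by (intro subspace_add subspace_scale) auto
    from bound[OF this]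
    have "(v + t *\<^sub>R u) \<bullet> (A *v (v + t *\<^sub>R u)) \<le> l * ((v + t *\<^sub>R u) \<bullet> (v + t *\<^sub>R u))" .
    moreover have "v \<bullet> (A *v u) = u \<bullet> (A *v v)" using sym_adj[OF sym, of v u] by (simp add: inner_commute)
    moreover have "u \<bullet> (A *v v) = l * (u \<bullet> v) - a"
      by (simp add: a_def u_def inner_diff_right inner_diff_left inner_commute algebra_simps)
    ultimately show ?thesis
      by (simp add: algebra_simps inner_add_left inner_add_right vv l_def[symmetric] c_def power2_eq_square inner_commute)
  qed
  have "a = 0" using quad_zero[OF key c] by (simp add: a_def)
  hence "u = 0" by (simp add: a_def)
  hence "A *v v = l *\<^sub>R v" by (simp add: u_def)
  then show ?thesis using vV nv l_def by blast
qed



definition orthonormal_eig :: "real^'n^'n \<Rightarrow> (real^'n) set \<Rightarrow> bool" where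
  "orthonormal_eig A B \<longleftrightarrow> finite B \<and> pairwise orthogonal B \<and>
     (\<forall>b\<in>B. norm b = 1 \<and> A *v b = (b \<bullet> (A *v b)) *\<^sub>R b)"

lemma spectral_sub:
  fixes A :: "real^'n^'n"
  assumes sym: "symmetric_mat A"
  shows "subspace V \<Longrightarrow> (\<And>x. x \<in> V \<Longrightarrow> A *v x \<in> V) \<Longrightarrow>
         \<exists>B. B \<subseteq> V \<and> orthonormal_eig A B \<and> span B = V"
proof (induction "dim V" arbitrary: V rule: less_induct)
  case less
  show ?case
  proof (cases "V = {0}")
    case True
    then show ?thesis by (intro exI[of _ "{}"]) (auto simp: orthonormal_eig_def)
  next
    case False
    obtain v where vV: "v \<in> V" and nv: "norm v = 1" and ev: "A *v v = (v \<bullet> (A *v v)) *\<^sub>R v"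
      using eigvec_exists[OF sym less.prems(1) less.prems(2) False] by blast
    have vv: "v \<bullet> v = 1" using nv by (simp add: norm_eq_1)
    define W where "W = {x \<in> V. v \<bullet> x = 0}"
    have sW: "subspace W"
      using less.prems(1) unfolding W_def subspace_def by (auto simp: inner_add_right)
    have iW: "A *v x \<in> W" if "x \<in> W" for x
    proof -
      have "v \<bullet> (A *v x) = (A *v v) \<bullet> x" using sym_adj[OF sym, of v x] by simp
      also have "\<dots> = (v \<bullet> (A *v v)) * (v \<bullet> x)" by (subst ev) simp
      also have "\<dots> = 0" using that by (simp add: W_def)
      finally show ?thesis using that less.prems(2) by (simp add: W_def)
    qed
    have "span W \<subset> span V"
    proof -
      have "span W = W" "span V = V" using sW less.prems(1) by (auto simp only: span_eq_iff)
      moreover have "W \<subset> V" using vV vv 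
      proof -
        have "W \<subseteq> V" by (auto simp: W_def)
        moreover have "v \<notin> W" using vv by (simp add: W_def)
        ultimately show ?thesis using vV by blast
      qed
      ultimately show ?thesis by (simp only:)
    qed
    hence "dim W < dim V" by (rule dim_psubset)
    then obtain BW where BW: "BW \<subseteq> W" "orthonormal_eig A BW" "span BW = W"
      using less.hyps[OF _ sW iW] by blast
    have BWV: "BW \<subseteq> V" using BW(1) by (auto simp: W_def)
    have orth: "orthogonal v b" "orthogonal b v" if "b \<in> BW" for b
      using that BW(1) by (auto simp: W_def orthogonal_def inner_commute)
    have "span (insert v BW) = V"
    proof
      show "span (insert v BW) \<subseteq> V" using BWV vV less.prems(1) by (intro span_minimal) auto
      show "V \<subseteq> span (insert v BW)"
      proof
        fix x assume x: "x \<in> V"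
        have "x - (v \<bullet> x) *\<^sub>R v \<in> W" using x vV less.prems(1) vv
          by (auto simp: W_def inner_diff_right subspace_diff subspace_scale)
        hence "x - (v \<bullet> x) *\<^sub>R v \<in> span (insert v BW)" using BW(3) span_mono[of BW "insert v BW"] by auto
        moreover have "(v \<bullet> x) *\<^sub>R v \<in> span (insert v BW)" by (simp add: span_base span_scale)
        ultimately have "(x - (v \<bullet> x) *\<^sub>R v) + (v \<bullet> x) *\<^sub>R v \<in> span (insert v BW)" by (rule span_add)
        then show "x \<in> span (insert v BW)" by simp
      qed
    qed
    moreover have "orthonormal_eig A (insert v BW)"
      using BW(2) nv ev orth unfolding orthonormal_eig_def by (auto simp: pairwise_insert)
    ultimately show ?thesis using BWV vV by (intro exI[of _ "insert v BW"]) auto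
  qed
qed

lemma spectral:
  fixes A :: "real^'n^'n"
  assumes "symmetric_mat A"
  obtains B where "orthonormal_eig A B" "span B = UNIV"
  using spectral_sub[OF assms, of UNIV] by auto

lemma orthonormal_inner:
  assumes "orthonormal_eig A B" "b \<in> B" "b' \<in> B"
  shows "b \<bullet> b' = (if b' = b then 1 else 0)"
  using assms unfolding orthonormal_eig_def pairwise_def orthogonal_def
  by (auto simp: norm_eq_1)

lemma orthonormal_coeff:
  assumes "orthonormal_eig A B" "b \<in> B"
  shows "b \<bullet> (\<Sum>b'\<in>B. f b' *\<^sub>R b') = f b"
proof -
  have fin: "finite B" using assms(1) by (simp add: orthonormal_eig_def)
  have "b \<bullet> (\<Sum>b'\<in>B. f b' *\<^sub>R b') = (\<Sum>b'\<in>B. f b' * (b \<bullet> b'))"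
    by (simp add: inner_sum_right)
  also have "\<dots> = (\<Sum>b'\<in>B. if b' = b then f b' else 0)"
    by (rule sum.cong) (auto simp: orthonormal_inner[OF assms(1,2)])
  also have "\<dots> = f b" using fin assms(2) by simp
  finally show ?thesis .
qed

lemma orthonormal_expand:
  assumes "orthonormal_eig A B" "span B = UNIV"
  shows "x = (\<Sum>b\<in>B. (b \<bullet> x) *\<^sub>R b)"
proof -
  define y where "y = x - (\<Sum>b\<in>B. (b \<bullet> x) *\<^sub>R b)"
  have "orthogonal y b" if "b \<in> B" for b
  proof -
    have "b \<bullet> y = b \<bullet> x - b \<bullet> (\<Sum>b\<in>B. (b \<bullet> x) *\<^sub>R b)" by (simp only: y_def inner_diff_right)
    also have "\<dots> = 0" using orthonormal_coeff[OF assms(1) that, of "\<lambda>b. b \<bullet> x"] by simp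
    finally show ?thesis unfolding orthogonal_def by (metis inner_commute)
  qed
  hence ob: "\<And>b. b \<in> B \<Longrightarrow> orthogonal y b" by blast
  have "orthogonal y y" by (rule orthogonal_to_span[of y B y]) (use ob assms(2) in auto)
  hence "y = 0" by (simp add: orthogonal_def)
  then show ?thesis by (simp add: y_def)
qed



lemma root_on_eigen:
  fixes R A :: "real^'n^'n"
  assumes R: "pos_semidef R" and RR: "R ** R = A" and ev: "A *v b = l *\<^sub>R b" and l: "l \<ge> 0"
  shows "R *v b = sqrt l *\<^sub>R b"
proof -
  have symR: "symmetric_mat R" using R by (simp add: pos_semidef_def)
  have RRv: "R *v (R *v y) = A *v y" for y using RR by (simp add: matrix_vector_mul_assoc)
  show ?thesis
  proof (cases "l = 0")
    case True
    have "(R *v b) \<bullet> (R *v b) = b \<bullet> (R *v (R *v b))" using sym_adj[OF symR] by simp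
    also have "\<dots> = 0" using RRv ev True by simp
    finally show ?thesis using True by simp
  next
    case False
    hence sl: "sqrt l > 0" using l by simp
    define u where "u = R *v b - sqrt l *\<^sub>R b"
    have "R *v u + sqrt l *\<^sub>R u = A *v b - l *\<^sub>R b"
      unfolding u_def using l
      by (simp add: RRv[symmetric] matrix_vector_mult_diff_distrib matrix_vector_mult_scaleR algebra_simps)
    hence Ru: "R *v u + sqrt l *\<^sub>R u = 0" using ev by simp
    have "u \<bullet> (R *v u) + sqrt l * (u \<bullet> u) = u \<bullet> (R *v u + sqrt l *\<^sub>R u)" by (simp add: inner_add_right)
    also have "\<dots> = 0" using Ru by simp
    finally have e: "u \<bullet> (R *v u) + sqrt l * (u \<bullet> u) = 0" .
    have "u \<bullet> (R *v u) \<ge> 0" using R by (simp add: pos_semidef_def)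
    moreover have "u \<bullet> u \<ge> 0" by simp
    ultimately have "sqrt l * (u \<bullet> u) = 0" using e sl by (smt (verit) mult_nonneg_nonneg)
    hence "u = 0" using sl by simp
    then show ?thesis by (simp add: u_def)
  qed
qed

lemma psd_sqrt_ex1:
  fixes A :: "real^'n^'n"
  assumes A: "pos_semidef A"
  shows "\<exists>!R. pos_semidef R \<and> R ** R = A"
proof -
  have symA: "symmetric_mat A" using A by (simp add: pos_semidef_def)
  obtain B where B: "orthonormal_eig A B" "span B = UNIV" using spectral[OF symA] by blast
  have fin: "finite B" using B(1) by (simp add: orthonormal_eig_def)
  define lam where "lam b = b \<bullet> (A *v b)" for b
  have lam0: "lam b \<ge> 0" for b using A by (simp add: lam_def pos_semidef_def)
  have evb: "A *v b = lam b *\<^sub>R b" if "b \<in> B" for b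
    using B(1) that by (simp add: orthonormal_eig_def lam_def)
  define f where "f x = (\<Sum>b\<in>B. (sqrt (lam b) * (b \<bullet> x)) *\<^sub>R b)" for x
  have lin: "linear f"
    by (rule linearI) (simp_all add: f_def inner_add_right algebra_simps sum.distrib scaleR_sum_right)
  define R0 where "R0 = matrix f"
  have R0v: "R0 *v x = f x" for x unfolding R0_def using matrix_vector_mul(2)[OF lin] by metis
  have coeff: "b \<bullet> f x = sqrt (lam b) * (b \<bullet> x)" if "b \<in> B" for b x
    unfolding f_def by (rule orthonormal_coeff[OF B(1) that])
  have expand: "x = (\<Sum>b\<in>B. (b \<bullet> x) *\<^sub>R b)" for x by (rule orthonormal_expand[OF B])
  have bil: "f x \<bullet> y = (\<Sum>b\<in>B. sqrt (lam b) * (b \<bullet> x) * (b \<bullet> y))" for x y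
    by (simp add: f_def inner_sum_left mult.assoc)
  have symR0: "symmetric_mat R0"
    by (rule adj_sym) (simp add: R0v bil inner_commute[of x "f y" for x y] mult_ac)
  have psdR0: "pos_semidef R0"
    unfolding pos_semidef_def
  proof (intro conjI allI symR0)
    fix v
    have "v \<bullet> (R0 *v v) = (\<Sum>b\<in>B. sqrt (lam b) * (b \<bullet> v) * (b \<bullet> v))"
      by (simp add: R0v bil inner_commute[of v])
    also have "\<dots> \<ge> 0" by (intro sum_nonneg) (simp add: lam0 mult.assoc)
    finally show "0 \<le> v \<bullet> (R0 *v v)" .
  qed
  have AR: "A *v x = (\<Sum>b\<in>B. (lam b * (b \<bullet> x)) *\<^sub>R b)" for x
  proof -
    have "A *v x = A *v (\<Sum>b\<in>B. (b \<bullet> x) *\<^sub>R b)" using expand[of x] by simp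
    also have "\<dots> = (\<Sum>b\<in>B. (b \<bullet> x) *\<^sub>R (A *v b))" by (simp add: vec.sum matrix_vector_mult_scaleR)
    also have "\<dots> = (\<Sum>b\<in>B. (lam b * (b \<bullet> x)) *\<^sub>R b)"
      by (rule sum.cong) (simp_all add: evb)
    finally show ?thesis .
  qed
  have sq: "R0 ** R0 = A"
  proof (subst matrix_eq, intro allI)
    fix x
    have "(R0 ** R0) *v x = f (f x)" by (simp add: R0v matrix_vector_mul_assoc[symmetric])
    also have "\<dots> = (\<Sum>b\<in>B. (lam b * (b \<bullet> x)) *\<^sub>R b)"
      unfolding f_def[of "f x"] by (rule sum.cong) (simp_all add: coeff lam0 mult.assoc[symmetric])
    also have "\<dots> = A *v x" using AR by simp
    finally show "(R0 ** R0) *v x = A *v x" .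
  qed
  have uniq: "R = R0" if R: "pos_semidef R" "R ** R = A" for R
  proof (subst matrix_eq, intro allI)
    fix x
    have "R *v x = R *v (\<Sum>b\<in>B. (b \<bullet> x) *\<^sub>R b)" using expand[of x] by simp
    also have "\<dots> = (\<Sum>b\<in>B. (b \<bullet> x) *\<^sub>R (R *v b))" by (simp add: vec.sum matrix_vector_mult_scaleR)
    also have "\<dots> = f x" unfolding f_def
      by (rule sum.cong) (simp_all add: root_on_eigen[OF R evb lam0] mult.commute)
    finally show "R *v x = R0 *v x" by (simp add: R0v)
  qed
  show ?thesis using psdR0 sq uniq by blast
qed

lemma psd_sqrt:
  fixes A :: "real^'n^'n"
  assumes "pos_semidef A"
  shows "pos_semidef (psd_sqrt A)" "psd_sqrt A ** psd_sqrt A = A"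
  using theI'[OF psd_sqrt_ex1[OF assms]] unfolding psd_sqrt_def by auto



lemma ellip_member:
  fixes M :: "real^'p^'n" and Sg :: "real^'p^'p"
  assumes pd: "pos_def Sg" and a: "\<alpha> > 0" and d: "\<delta> \<bullet> \<delta> \<le> \<alpha>"
  shows "(M ** psd_sqrt Sg) *v \<delta> \<in> ellipsoid (\<alpha> *\<^sub>R (M ** Sg ** transpose M))"
proof -
  have psdS: "pos_semidef Sg" using pd unfolding pos_def_def pos_semidef_def
    by (metis inner_zero_left order.strict_implies_order order_refl)
  define S where "S = psd_sqrt Sg"
  have S: "pos_semidef S" "S ** S = Sg" using psd_sqrt[OF psdS] by (auto simp: S_def)
  have symS: "symmetric_mat S" using S(1) by (simp add: pos_semidef_def)
  define Q where "Q = \<alpha> *\<^sub>R (M ** Sg ** transpose M)"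
  define g where "g y = S *v (transpose M *v y)" for y
  have Qv: "Q *v y = \<alpha> *\<^sub>R (M *v (S *v g y))" for y
    by (simp add: Q_def g_def scaleR_mat_vec matrix_vector_mul_assoc S(2)[symmetric] matrix_mul_assoc
        del: transpose_matrix_vector)
  have Mt: "(M *v z) \<bullet> y = z \<bullet> (transpose M *v y)" for z y
    using transpose_adj[of M y z] by (simp add: inner_commute del: transpose_matrix_vector)
  have Qform: "(Q *v x) \<bullet> y = \<alpha> * (g x \<bullet> g y)" for x y
  proof -
    have "(Q *v x) \<bullet> y = \<alpha> * ((M *v (S *v g x)) \<bullet> y)" by (simp add: Qv)
    also have "\<dots> = \<alpha> * ((S *v g x) \<bullet> (transpose M *v y))" by (simp only: Mt)
    also have "\<dots> = \<alpha> * (g x \<bullet> g y)" by (simp only: sym_adj[OF symS] g_def)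
    finally show ?thesis .
  qed
  have psdQ: "pos_semidef Q"
    unfolding pos_semidef_def
  proof (intro conjI allI)
    show "symmetric_mat Q"
      by (rule adj_sym) (metis Qform inner_commute)
    fix v show "0 \<le> v \<bullet> (Q *v v)" using Qform[of v v] a by (simp add: inner_commute)
  qed
  define R where "R = psd_sqrt Q"
  have R: "pos_semidef R" "R ** R = Q" using psd_sqrt[OF psdQ] by (auto simp: R_def)
  have symR: "symmetric_mat R" using R(1) by (simp add: pos_semidef_def)
  define w where "w = (1 / sqrt \<alpha>) *\<^sub>R \<delta>"
  have ww: "w \<bullet> w \<le> 1" using d a by (simp add: w_def divide_le_eq)
  obtain p q where p: "p \<in> span (range g)" and q: "\<And>z. z \<in> span (range g) \<Longrightarrow> orthogonal q z"
    and wpq: "w = p + q"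
    using orthogonal_subspace_decomp_exists[of "range g" w] by metis
  have g_eq: "g = (*v) (S ** transpose M)" by (rule ext) (simp only: g_def matrix_vector_mul_assoc)
  have "subspace (range g)" unfolding g_eq by (metis linear_subspace_image matrix_vector_mul_linear subspace_UNIV)
  hence "span (range g) = range g" by (simp only: span_eq_iff)
  hence "p \<in> range g" using p by (simp only:)
  then obtain y0 where y0: "p = g y0" by blast
  have Mq: "M *v (S *v q) = 0"
  proof -
    have "q \<bullet> g y = 0" for y using q[of "g y"] by (simp add: span_base orthogonal_def)
    hence "(M *v (S *v q)) \<bullet> y = 0" for y
      by (simp add: Mt sym_adj[OF symS] g_def del: transpose_matrix_vector)
    from this[of "M *v (S *v q)"] show ?thesis by simp
  qed
  have pq: "p \<bullet> q = 0" using q[OF p] by (simp add: orthogonal_def inner_commute)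
  define u where "u = (1 / sqrt \<alpha>) *\<^sub>R (R *v y0)"
  have sa: "sqrt \<alpha> / \<alpha> = 1 / sqrt \<alpha>"
  proof -
    have "\<alpha> = sqrt \<alpha> * sqrt \<alpha>" using a by simp
    moreover have "sqrt \<alpha> > 0" using a by simp
    ultimately show ?thesis by (metis divide_divide_eq_left divide_self_if order_less_irrefl)
  qed
  have "(M ** S) *v \<delta> = sqrt \<alpha> *\<^sub>R (M *v (S *v w))"
    using a by (simp add: w_def matrix_vector_mult_scaleR matrix_vector_mul_assoc)
  also have "\<dots> = sqrt \<alpha> *\<^sub>R (M *v (S *v g y0))"
    by (simp add: wpq y0 matrix_vector_right_distrib Mq)
  also have "\<dots> = (sqrt \<alpha> / \<alpha>) *\<^sub>R (Q *v y0)" using a by (simp add: Qv)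
  also have "\<dots> = R *v u"
    using a by (simp add: u_def matrix_vector_mult_scaleR R(2)[symmetric] matrix_vector_mul_assoc[symmetric]
        sa)
  finally have eq: "(M ** S) *v \<delta> = R *v u" .
  have "u \<bullet> u = (1/\<alpha>) * ((R *v y0) \<bullet> (R *v y0))" using a by (simp add: u_def)
  also have "(R *v y0) \<bullet> (R *v y0) = (Q *v y0) \<bullet> y0"
    using sym_adj[OF symR, of "R *v y0" y0] R(2) by (simp add: matrix_vector_mul_assoc inner_commute)
  also have "\<dots> = \<alpha> * (p \<bullet> p)" by (simp add: Qform y0)
  finally have "u \<bullet> u = p \<bullet> p" using a by simp
  also have "\<dots> \<le> w \<bullet> w" using pq by (simp add: wpq inner_add_left inner_add_right inner_commute)
  finally have "u \<bullet> u \<le> 1" using ww by simp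
  then show ?thesis using eq unfolding ellipsoid_def S_def[symmetric] Q_def[symmetric] R_def[symmetric] by blast
qed



theorem theorem3:
  fixes F :: "real^'n^'n" and G :: "real^'m^'n" and K :: "real^'n^'m"
    and L :: "real^'p^'n" and \<Sigma> :: "real^'p^'p" and \<alpha> :: real
    and k0 :: nat and e x :: "nat \<Rightarrow> real^'n" and \<delta> :: "nat \<Rightarrow> real^'p"
  assumes "spectral_radius F < 1"
    and "spectral_radius (F + G ** K) < 1"
    and "pos_def \<Sigma>"
    and "\<alpha> > 0"
    and "e k0 = 0" and "x k0 = 0"
    and "\<And>k. k \<ge> k0 \<Longrightarrow> e (Suc k) = F *v e k - (L ** psd_sqrt \<Sigma>) *v \<delta> k"
    and "\<And>k. k \<ge> k0 \<Longrightarrow> x (Suc k) = (F + G ** K) *v x k - (G ** K) *v e k"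
    and "\<And>k. \<delta> k \<bullet> \<delta> k \<le> \<alpha>"
  shows "\<forall>k\<ge>k0. x k \<in> minkowski_infsum (\<lambda>j.
           ellipsoid (\<alpha> *\<^sub>R ((matpow (F + G ** K) j - matpow F j) ** L ** \<Sigma> **
                               transpose L ** transpose (matpow (F + G ** K) j - matpow F j))))"
proof -
  note pd = assms(3) and a = assms(4) and e0 = assms(5) and x0 = assms(6)
    and erec = assms(7) and xrec = assms(8) and db = assms(9)
  define Aa where "Aa = F + G ** K"
  define S where "S = psd_sqrt \<Sigma>"
  define c where "c i = (L ** S) *v \<delta> i" for i
  define H where "H j = matpow Aa j - matpow F j" for j
  have eform: "e (k0 + d) = - (\<Sum>j<d. matpow F j *v c (k0 + d - 1 - j))" for d
  proof (induction d)
    case 0 then show ?case using e0 by simp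
  next
    case (Suc d)
    have "e (k0 + Suc d) = F *v e (k0 + d) - c (k0 + d)"
      using erec[of "k0 + d"] by (simp add: c_def S_def)
    also have "\<dots> = - (c (k0 + d) + (\<Sum>j<d. matpow F (Suc j) *v c (k0 + d - 1 - j)))"
      by (simp add: Suc vec.sum vec.neg matrix_vector_mul_assoc matrix_vector_mult_diff_distrib)
    also have "\<dots> = - (\<Sum>j<Suc d. matpow F j *v c (k0 + Suc d - 1 - j))"
      by (subst sum.lessThan_Suc_shift) simp
    finally show ?case .
  qed
  have zform: "x (k0 + d) - e (k0 + d) = (\<Sum>j<d. matpow Aa j *v c (k0 + d - 1 - j))" for d
  proof (induction d)
    case 0 then show ?case using e0 x0 by simp
  next
    case (Suc d)
    have "x (k0 + Suc d) - e (k0 + Suc d) = Aa *v (x (k0 + d) - e (k0 + d)) + c (k0 + d)"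
      using erec[of "k0 + d"] xrec[of "k0 + d"]
      by (simp add: c_def S_def Aa_def matrix_vector_mult_diff_distrib matrix_vector_mult_add_rdistrib)
    also have "\<dots> = c (k0 + d) + (\<Sum>j<d. matpow Aa (Suc j) *v c (k0 + d - 1 - j))"
      by (simp add: Suc vec.sum matrix_vector_mul_assoc)
    also have "\<dots> = (\<Sum>j<Suc d. matpow Aa j *v c (k0 + Suc d - 1 - j))"
      by (subst sum.lessThan_Suc_shift) simp
    finally show ?case .
  qed
  have xform: "x (k0 + d) = (\<Sum>j<d. H j *v c (k0 + d - 1 - j))" for d
  proof -
    have "x (k0 + d) = (\<Sum>j<d. matpow Aa j *v c (k0 + d - 1 - j)) + e (k0 + d)"
      using zform[of d] by (metis diff_add_cancel)
    also have "\<dots> = (\<Sum>j<d. matpow Aa j *v c (k0 + d - 1 - j)) - (\<Sum>j<d. matpow F j *v c (k0 + d - 1 - j))"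
      using eform[of d] by simp
    also have "\<dots> = (\<Sum>j<d. H j *v c (k0 + d - 1 - j))"
      by (simp add: H_def matrix_vector_mult_diff_rdistrib sum_subtractf)
    finally show ?thesis .
  qed
  have H0: "H 0 = 0" by (simp add: H_def)
  define E where "E j = ellipsoid (\<alpha> *\<^sub>R (H j ** L ** \<Sigma> ** transpose L ** transpose (H j)))" for j
  have memb: "H j *v c i \<in> E j" for i j
  proof -
    have "H j *v c i = (H j ** L ** S) *v \<delta> i" by (simp add: c_def matrix_vector_mul_assoc matrix_mul_assoc)
    also have "\<dots> \<in> ellipsoid (\<alpha> *\<^sub>R ((H j ** L) ** \<Sigma> ** transpose (H j ** L)))"
      unfolding S_def by (rule ellip_member[OF pd a db])
    also have "\<dots> = E j" by (simp add: E_def matrix_transpose_mul matrix_mul_assoc)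
    finally show ?thesis .
  qed
  have zero: "0 \<in> E j" for j
    unfolding E_def ellipsoid_def by (rule CollectI, rule exI[of _ 0]) simp
  show ?thesis unfolding Aa_def[symmetric] H_def[symmetric] E_def[symmetric]
  proof (intro allI impI)
    fix k assume k: "k0 \<le> k"
    define d where "d = k - k0"
    have kd: "k = k0 + d" using k by (simp add: d_def)
    define y where "y j = (if j < d - 1 then H (Suc j) *v c (k0 + d - 1 - Suc j) else 0)" for j
    have ymem: "y j \<in> E (Suc j)" for j by (simp add: y_def memb zero)
    have ysum: "y sums (\<Sum>j<d - 1. y j)" by (rule sums_finite) (auto simp: y_def)
    have "(\<Sum>j<d - 1. y j) = x k"
    proof (cases d)
      case 0 then show ?thesis using x0 kd by simp
    next
      case (Suc d')
      have "x k = (\<Sum>j<Suc d'. H j *v c (k0 + d - 1 - j))" using xform[of d] kd Suc by (simp only:)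
      also have "\<dots> = (\<Sum>j<d'. H (Suc j) *v c (k0 + d - 1 - Suc j))"
        by (subst sum.lessThan_Suc_shift) (simp add: H0)
      also have "\<dots> = (\<Sum>j<d - 1. y j)" using Suc by (simp add: y_def)
      finally show ?thesis by simp
    qed
    then show "x k \<in> minkowski_infsum E"
      unfolding minkowski_infsum_def using ymem ysum by auto
  qed
qed


end
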